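(* Let $\sigma: \Omega \to \Delta(A)$ be a canonical experiment. Then $\tau^{*} \in BR(\sigma)$ if and only if there exists $p \in P_r^{*}(\sigma)$ such that for all $a, b \in A$, $$\sum_{\omega \in \Omega} p(\omega)\sigma(a\mid\omega)\,[u_r(b,\omega) - u_r(a,\omega)] \le 0.$$
   Context: Setting: $\Omega$ is a finite set of states, $A$ a finite set of receiver actions, $u_r: A \times \Omega \to \mathbb{R}$ the receiver's payoff. $P \subseteq \Delta(\Omega)$ is a nonempty closed convex set of priors; the receiver has maxmin expected utility preferences. A canonical experiment is $\sigma: \Omega \to \Delta(A)$; a receiver strategy is $\tau: A \to \Delta(A)$. $u_r(p,\sigma,\tau) = \sum_{\omega,m,a} p(\omega)\sigma(m\mid\omega)\tau(a\mid m)u_r(a,\omega)$, $u_r(\sigma,\tau) = \min_{p \in P} u_r(p,\sigma,\tau)$, and $BR(\sigma) = \arg\max_{\tau} u_r(\sigma,\tau)$ over all $\tau: A \to \Delta(A)$. The obedient strategy $\tau^{*}$ is $\tau^{*}(a\mid a) = 1$ for all $a$. $P_r^{*}(\sigma) = \arg\min_{p \in P} u_r(p,\sigma,\tau^{*})$ is the set of worst-case priors under obedience. *)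

theory Defs
  imports "HOL-Analysis.Analysis"
begin

definition is_dist :: "('x::finite \<Rightarrow> real) \<Rightarrow> bool" where
  "is_dist q \<longleftrightarrow> (\<forall>x. 0 \<le> q x) \<and> (\<Sum>x\<in>UNIV. q x) = 1"

definition is_prior :: "real ^ 'w::finite \<Rightarrow> bool" where
  "is_prior p \<longleftrightarrow> is_dist (\<lambda>w. p $ w)"

text \<open>A (canonical) experiment sigma: Omega -> Delta(A), written sigma w a = sigma(a|w);
a receiver strategy tau: A -> Delta(A), written tau m a = tau(a|m).\<close>

definition is_experiment :: "('w::finite \<Rightarrow> 'a::finite \<Rightarrow> real) \<Rightarrow> bool" where
  "is_experiment \<sigma> \<longleftrightarrow> (\<forall>w. is_dist (\<sigma> w))"

definition is_strategy :: "('a::finite \<Rightarrow> 'a \<Rightarrow> real) \<Rightarrow> bool" where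
  "is_strategy \<tau> \<longleftrightarrow> (\<forall>m. is_dist (\<tau> m))"

definition ur_p :: "('a::finite \<Rightarrow> 'w::finite \<Rightarrow> real) \<Rightarrow> real ^ 'w \<Rightarrow>
    ('w \<Rightarrow> 'a \<Rightarrow> real) \<Rightarrow> ('a \<Rightarrow> 'a \<Rightarrow> real) \<Rightarrow> real" where
  "ur_p u p \<sigma> \<tau> = (\<Sum>w\<in>UNIV. \<Sum>m\<in>UNIV. \<Sum>a\<in>UNIV. p $ w * \<sigma> w m * \<tau> m a * u a w)"

text \<open>Maxmin utility: the minimum over the (compact) prior set P, expressed as an infimum.\<close>
definition ur :: "('a::finite \<Rightarrow> 'w::finite \<Rightarrow> real) \<Rightarrow> (real ^ 'w) set \<Rightarrow>
    ('w \<Rightarrow> 'a \<Rightarrow> real) \<Rightarrow> ('a \<Rightarrow> 'a \<Rightarrow> real) \<Rightarrow> real" where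
  "ur u P \<sigma> \<tau> = (INF p\<in>P. ur_p u p \<sigma> \<tau>)"

definition BR :: "('a::finite \<Rightarrow> 'w::finite \<Rightarrow> real) \<Rightarrow> (real ^ 'w) set \<Rightarrow>
    ('w \<Rightarrow> 'a \<Rightarrow> real) \<Rightarrow> ('a \<Rightarrow> 'a \<Rightarrow> real) set" where
  "BR u P \<sigma> = {\<tau>. is_strategy \<tau> \<and> (\<forall>\<tau>'. is_strategy \<tau>' \<longrightarrow> ur u P \<sigma> \<tau>' \<le> ur u P \<sigma> \<tau>)}"

definition obedient :: "'a \<Rightarrow> 'a \<Rightarrow> real" where
  "obedient m a = (if a = m then 1 else 0)"

definition worst_priors :: "('a::finite \<Rightarrow> 'w::finite \<Rightarrow> real) \<Rightarrow> (real ^ 'w) set \<Rightarrow>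
    ('w \<Rightarrow> 'a \<Rightarrow> real) \<Rightarrow> (real ^ 'w) set" where
  "worst_priors u P \<sigma> = {p \<in> P. \<forall>q\<in>P. ur_p u p \<sigma> obedient \<le> ur_p u q \<sigma> obedient}"

end

theory Submission
  imports Defs
begin

definition coef :: "('a::finite \<Rightarrow> 'w::finite \<Rightarrow> real) \<Rightarrow> ('w \<Rightarrow> 'a \<Rightarrow> real) \<Rightarrow> ('a \<Rightarrow> 'a \<Rightarrow> real) \<Rightarrow> real ^ 'w" where
  "coef u \<sigma> \<tau> = (\<chi> w. \<Sum>m\<in>UNIV. \<Sum>a\<in>UNIV. \<sigma> w m * \<tau> m a * u a w)"

definition dvec :: "('a::finite \<Rightarrow> 'w::finite \<Rightarrow> real) \<Rightarrow> ('w \<Rightarrow> 'a \<Rightarrow> real) \<Rightarrow> 'a \<Rightarrow> 'a \<Rightarrow> real ^ 'w" where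
  "dvec u \<sigma> a b = (\<chi> w. \<sigma> w a * (u b w - u a w))"

lemma sum_delta_helper: "(\<Sum>a\<in>(UNIV::'a::finite set). c * (if a = m then 1 else 0) * f a) = (c * f m::real)"
  by (simp add: if_distrib[where f="\<lambda>x. c * x"] if_distrib[where f="\<lambda>x. x * f _"] cong: if_cong)

lemma ur_p_inner: "ur_p u p \<sigma> \<tau> = inner p (coef u \<sigma> \<tau>)"
  unfolding ur_p_def inner_vec_def coef_def
  by (simp add: sum_distrib_left mult.assoc)

lemma dev_inner: "(\<Sum>w\<in>UNIV. p $ w * \<sigma> w a * (u b w - u a w)) = inner p (dvec u \<sigma> a b)"
  unfolding inner_vec_def dvec_def by (simp add: mult.assoc)

lemma dvec_diag: "dvec u \<sigma> a a = 0"
  unfolding dvec_def by (simp add: vec_eq_iff)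

lemma key_identity:
  assumes "\<forall>m. sum (\<tau> m) UNIV = 1"
  shows "ur_p u p \<sigma> \<tau> = ur_p u p \<sigma> obedient
     + (\<Sum>m\<in>UNIV. \<Sum>b\<in>UNIV. \<tau> m b * inner p (dvec u \<sigma> m b))"
proof -
  have ob: "ur_p u p \<sigma> obedient = (\<Sum>w\<in>UNIV. \<Sum>m\<in>UNIV. p $ w * \<sigma> w m * u m w)"
    unfolding ur_p_def obedient_def by (simp only: sum_delta_helper)
  have 1: "\<And>m b. \<tau> m b * inner p (dvec u \<sigma> m b) = (\<Sum>w\<in>UNIV. p $ w * \<sigma> w m * \<tau> m b * u b w) - \<tau> m b * (\<Sum>w\<in>UNIV. p $ w * \<sigma> w m * u m w)"
    unfolding inner_vec_def dvec_def by (simp add: sum_distrib_left right_diff_distrib sum_subtractf mult_ac)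
  have 2: "\<And>m. (\<Sum>b\<in>UNIV. \<tau> m b * (\<Sum>w\<in>UNIV. p $ w * \<sigma> w m * u m w)) = (\<Sum>w\<in>UNIV. p $ w * \<sigma> w m * u m w)"
    using assms by (simp add: sum_distrib_right[symmetric])
  have "(\<Sum>m\<in>UNIV. \<Sum>b\<in>UNIV. \<tau> m b * inner p (dvec u \<sigma> m b))
      = (\<Sum>m\<in>UNIV. \<Sum>b\<in>UNIV. \<Sum>w\<in>UNIV. p $ w * \<sigma> w m * \<tau> m b * u b w)
      - (\<Sum>m\<in>UNIV. \<Sum>w\<in>UNIV. p $ w * \<sigma> w m * u m w)"
    by (simp only: 1 2 sum_subtractf)
  also have "\<dots> = ur_p u p \<sigma> \<tau> - ur_p u p \<sigma> obedient"
  proof -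
    have 3: "ur_p u p \<sigma> \<tau> = (\<Sum>m\<in>UNIV. \<Sum>b\<in>UNIV. \<Sum>w\<in>UNIV. p $ w * \<sigma> w m * \<tau> m b * u b w)"
      unfolding ur_p_def by (subst sum.swap, rule sum.cong[OF refl], rule sum.swap)
    have 4: "ur_p u p \<sigma> obedient = (\<Sum>m\<in>UNIV. \<Sum>w\<in>UNIV. p $ w * \<sigma> w m * u m w)"
      unfolding ob by (rule sum.swap)
    show ?thesis unfolding 3 4 ..
  qed
  finally show ?thesis by simp
qed


lemma compact_priors:
  assumes "closed P" "\<forall>p\<in>P. is_prior p"
  shows "compact (P :: (real ^ 'w::finite) set)"
proof -
  have "P \<subseteq> cbox 0 1"
  proof
    fix p assume "p \<in> P"
    then have d: "\<forall>w. 0 \<le> p $ w" "(\<Sum>w\<in>UNIV. p $ w) = 1"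
      using assms(2) unfolding is_prior_def is_dist_def by auto
    have "\<forall>w. p $ w \<le> 1"
    proof
      fix w
      have "p $ w \<le> (\<Sum>w\<in>UNIV. p $ w)"
        by (rule member_le_sum) (use d in auto)
      then show "p $ w \<le> 1" using d by simp
    qed
    then show "p \<in> cbox 0 1" using d by (simp add: mem_box_cart)
  qed
  then have "P = P \<inter> cbox 0 1" by blast
  then show ?thesis using assms(1) by (metis closed_Int_compact compact_cbox)
qed

lemma ur_attained:
  assumes "compact P" "P \<noteq> {}"
  shows "\<exists>p0\<in>P. ur u P \<sigma> \<tau> = ur_p u p0 \<sigma> \<tau> \<and> (\<forall>q\<in>P. ur_p u p0 \<sigma> \<tau> \<le> ur_p u q \<sigma> \<tau>)"
proof -
  have "continuous_on P (\<lambda>p. ur_p u p \<sigma> \<tau>)"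
    unfolding ur_p_inner by (intro continuous_intros)
  then obtain p0 where p0: "p0 \<in> P" "\<forall>q\<in>P. ur_p u p0 \<sigma> \<tau> \<le> ur_p u q \<sigma> \<tau>"
    using continuous_attains_inf[OF assms] by blast
  have "ur u P \<sigma> \<tau> = ur_p u p0 \<sigma> \<tau>"
    unfolding ur_def by (rule cInf_eq_minimum) (use p0 in auto)
  then show ?thesis using p0 by blast
qed

lemma obedient_strategy: "is_strategy (obedient :: 'a::finite \<Rightarrow> 'a \<Rightarrow> real)"
  unfolding is_strategy_def is_dist_def obedient_def by simp

theorem mainTheorem5:
  fixes u :: "'a::finite \<Rightarrow> 'w::finite \<Rightarrow> real"
    and P :: "(real ^ 'w) set"
    and \<sigma> :: "'w \<Rightarrow> 'a \<Rightarrow> real"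
  assumes "P \<noteq> {}" and "closed P" and "convex P" and "\<forall>p\<in>P. is_prior p"
    and "is_experiment \<sigma>"
  shows "obedient \<in> BR u P \<sigma> \<longleftrightarrow>
    (\<exists>p\<in>worst_priors u P \<sigma>. \<forall>a b.
       (\<Sum>w\<in>UNIV. p $ w * \<sigma> w a * (u b w - u a w)) \<le> 0)"
proof
  have cP: "compact P" using compact_priors assms(2,4) by blast
  have ob1: "\<forall>m. sum ((obedient :: 'a \<Rightarrow> 'a \<Rightarrow> real) m) UNIV = 1"
    using obedient_strategy unfolding is_strategy_def is_dist_def by auto
  show "(\<exists>p\<in>worst_priors u P \<sigma>. \<forall>a b.
       (\<Sum>w\<in>UNIV. p $ w * \<sigma> w a * (u b w - u a w)) \<le> 0) \<Longrightarrow> obedient \<in> BR u P \<sigma>"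
  proof -
    assume "\<exists>p\<in>worst_priors u P \<sigma>. \<forall>a b.
       (\<Sum>w\<in>UNIV. p $ w * \<sigma> w a * (u b w - u a w)) \<le> 0"
    then obtain p0 where p0: "p0 \<in> P" "\<forall>q\<in>P. ur_p u p0 \<sigma> obedient \<le> ur_p u q \<sigma> obedient"
      and dev: "\<forall>a b. inner p0 (dvec u \<sigma> a b) \<le> 0"
      unfolding worst_priors_def dev_inner by blast
    have V: "ur u P \<sigma> obedient = ur_p u p0 \<sigma> obedient"
      unfolding ur_def by (rule cInf_eq_minimum) (use p0 in auto)
    have "ur u P \<sigma> \<tau>' \<le> ur u P \<sigma> obedient" if st: "is_strategy \<tau>'" for \<tau>'
    proof -
      obtain q where q: "q \<in> P" "ur u P \<sigma> \<tau>' = ur_p u q \<sigma> \<tau>'"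
        "\<forall>r\<in>P. ur_p u q \<sigma> \<tau>' \<le> ur_p u r \<sigma> \<tau>'"
        using ur_attained[OF cP assms(1)] by blast
      have rows: "\<forall>m. sum (\<tau>' m) UNIV = 1" and nn: "\<And>m b. 0 \<le> \<tau>' m b"
        using st unfolding is_strategy_def is_dist_def by auto
      have "ur u P \<sigma> \<tau>' \<le> ur_p u p0 \<sigma> \<tau>'" using q p0 by auto
      also have "\<dots> = ur_p u p0 \<sigma> obedient
          + (\<Sum>m\<in>UNIV. \<Sum>b\<in>UNIV. \<tau>' m b * inner p0 (dvec u \<sigma> m b))"
        by (rule key_identity[OF rows])
      also have "\<dots> \<le> ur_p u p0 \<sigma> obedient"
      proof -
        have "(\<Sum>m\<in>UNIV. \<Sum>b\<in>UNIV. \<tau>' m b * inner p0 (dvec u \<sigma> m b)) \<le> 0"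
          by (intro sum_nonpos mult_nonneg_nonpos nn dev[rule_format])
        then show ?thesis by simp
      qed
      finally show ?thesis using V by simp
    qed
    then show "obedient \<in> BR u P \<sigma>"
      unfolding BR_def using obedient_strategy by blast
  qed
next
  assume BR: "obedient \<in> BR u P \<sigma>"
  have cP: "compact P" using compact_priors assms(2,4) by blast
  show "\<exists>p\<in>worst_priors u P \<sigma>. \<forall>a b.
       (\<Sum>w\<in>UNIV. p $ w * \<sigma> w a * (u b w - u a w)) \<le> 0"
  proof (rule ccontr)
    assume H: "\<not> ?thesis"
    define g where "g p = ur_p u p \<sigma> obedient" for p
    obtain p0 where p0: "p0 \<in> P" "ur u P \<sigma> obedient = g p0" "\<forall>q\<in>P. g p0 \<le> g q"
      using ur_attained[OF cP assms(1)] unfolding g_def by blast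
    define V where "V = g p0"
    define W where "W = P \<inter> {p. inner p (coef u \<sigma> obedient) \<le> V}"
    have W_eq: "W = worst_priors u P \<sigma>"
      unfolding W_def worst_priors_def using p0 unfolding V_def g_def ur_p_inner
      by (auto intro: order_trans)
    have "p0 \<in> W" unfolding W_def V_def g_def ur_p_inner by (simp add: p0)
    have hs: "{p. inner p (coef u \<sigma> obedient) \<le> V} = {p. inner (coef u \<sigma> obedient) p \<le> V}"
      by (simp add: inner_commute)
    have cW: "compact W" unfolding W_def hs
      by (intro compact_Int_closed cP closed_halfspace_le)
    have cvW: "convex W" unfolding W_def hs
      by (intro convex_Int assms(3) convex_halfspace_le)
    define Dv :: "real ^ 'w \<Rightarrow> real ^ ('a \<times> 'a)" where
      "Dv p = (\<chi> i. inner p (dvec u \<sigma> (fst i) (snd i)))" for p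
    have linDv: "linear Dv"
      by (rule linearI) (simp_all add: Dv_def vec_eq_iff inner_add_left)
    define K where "K = Dv ` W"
    define N :: "(real ^ ('a \<times> 'a)) set" where "N = {x. \<forall>i. x $ i \<le> 0}"
    have N_eq: "N = (\<Inter>i. {x. inner (axis i 1) x \<le> 0})"
      unfolding N_def by (auto simp: inner_axis')
    have cN: "closed N" unfolding N_eq
      by (intro closed_INT ballI closed_halfspace_le)
    have cvN: "convex N" unfolding N_eq
      by (intro convex_INT ballI convex_halfspace_le)
    have cK: "compact K" unfolding K_def
      by (intro compact_continuous_image cW linear_continuous_on linear_conv_bounded_linear[THEN iffD1] linDv)
    have cvK: "convex K" unfolding K_def
      by (intro convex_linear_image cvW linDv)
    have neK: "K \<noteq> {}" unfolding K_def using \<open>p0 \<in> W\<close> by blast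
    have disj: "K \<inter> N = {}"
    proof -
      have "\<not> (\<forall>i. Dv p $ i \<le> 0)" if "p \<in> W" for p
      proof
        assume "\<forall>i. Dv p $ i \<le> 0"
        then have "\<forall>a b. (\<Sum>w\<in>UNIV. p $ w * \<sigma> w a * (u b w - u a w)) \<le> 0"
          unfolding dev_inner Dv_def by (metis fst_conv snd_conv vec_lambda_beta)
        then show False using H that W_eq by blast
      qed
      then show ?thesis unfolding K_def N_def by auto
    qed
    obtain av bv where sep: "\<forall>x\<in>K. inner av x < bv" "\<forall>x\<in>N. bv < inner av x"
      using separating_hyperplane_compact_closed[OF cvK cK neK cvN cN disj] by blast
    have "0 \<in> N" unfolding N_def by simp
    then have bneg: "bv < 0" using sep(2) by fastforce
    have aneg: "av $ i \<le> 0" for i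
    proof (rule ccontr)
      assume "\<not> av $ i \<le> 0"
      then have pos: "av $ i > 0" by simp
      define t where "t = - (\<bar>bv\<bar> + 1) / av $ i"
      have "t \<le> 0" unfolding t_def using pos by (simp add: divide_nonpos_pos)
      then have "axis i t \<in> N" unfolding N_def by (simp add: axis_def)
      then have "bv < inner av (axis i t)" using sep(2) by blast
      also have "inner av (axis i t) = - (\<bar>bv\<bar> + 1)"
        unfolding inner_axis t_def using pos by simp
      finally show False by simp
    qed
    define lam where "lam m c = - (av $ (m, c))" for m c
    have lam_nn: "0 \<le> lam m c" for m c unfolding lam_def using aneg by simp
    define L where "L p = (\<Sum>m\<in>UNIV. \<Sum>c\<in>UNIV. lam m c * inner p (dvec u \<sigma> m c))" for p
    have L_inner: "L p = - inner av (Dv p)" for p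
    proof -
      have "inner av (Dv p) = (\<Sum>i\<in>UNIV \<times> UNIV. av $ i * inner p (dvec u \<sigma> (fst i) (snd i)))"
        by (simp add: inner_vec_def[of av] Dv_def)
      also have "\<dots> = (\<Sum>m\<in>UNIV. \<Sum>c\<in>UNIV. av $ (m, c) * inner p (dvec u \<sigma> m c))"
        by (simp add: sum.cartesian_product case_prod_beta)
      finally show ?thesis by (simp add: L_def lam_def sum_negf)
    qed
    have L_pos: "0 < L p" if "p \<in> W" for p
    proof -
      have "Dv p \<in> K" unfolding K_def using that by blast
      then have "inner av (Dv p) < bv" using sep(1) by blast
      then show ?thesis unfolding L_inner using bneg by simp
    qed
    have contL: "continuous_on P L"
      unfolding L_def by (intro continuous_intros)
    have contg: "continuous_on P g"
      unfolding g_def ur_p_inner by (intro continuous_intros)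
    have gV: "V \<le> g p" if "p \<in> P" for p using p0 that unfolding V_def by blast
    have W_iff: "p \<in> W \<longleftrightarrow> g p \<le> V" if "p \<in> P" for p
      unfolding W_def g_def ur_p_inner using that by simp
    define \<Lambda> where "\<Lambda> = (\<Sum>m\<in>UNIV. \<Sum>c\<in>UNIV. lam m c)"
    have \<Lambda>_nn: "0 \<le> \<Lambda>" unfolding \<Lambda>_def by (intro sum_nonneg lam_nn)
    obtain M where M: "M > 0" "\<forall>p\<in>P. \<bar>L p\<bar> \<le> M"
    proof -
      have "compact (L ` P)" by (rule compact_continuous_image[OF contL cP])
      then have "bounded (L ` P)" by (rule compact_imp_bounded)
      then show ?thesis using that unfolding bounded_pos by auto
    qed
    obtain \<epsilon> where eps: "\<epsilon> > 0" "\<epsilon> \<le> 1 / (1 + \<Lambda>)" "\<forall>p\<in>P. V < g p + \<epsilon> * L p"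
    proof (cases "P \<inter> {p. L p \<le> 0} = {}")
      case True
      define \<epsilon> where "\<epsilon> = 1 / (1 + \<Lambda>)"
      have "\<epsilon> > 0" unfolding \<epsilon>_def using \<Lambda>_nn by simp
      moreover have "V < g p + \<epsilon> * L p" if "p \<in> P" for p
      proof -
        have "L p > 0" using True that by auto
        then have "\<epsilon> * L p > 0" using \<open>\<epsilon> > 0\<close> by simp
        then show ?thesis using gV[OF that] by simp
      qed
      moreover have "\<epsilon> \<le> 1 / (1 + \<Lambda>)" unfolding \<epsilon>_def by simp
      ultimately show ?thesis using that by blast
    next
      case False
      define S where "S = P \<inter> {p. L p \<le> 0}"
      have contLU: "continuous_on UNIV L" unfolding L_def by (intro continuous_intros)
      have cS: "compact S" unfolding S_def
        by (intro compact_Int_closed cP closed_Collect_le contLU continuous_on_const)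
      have cgS: "continuous_on S g" by (rule continuous_on_subset[OF contg]) (auto simp: S_def)
      have neS: "S \<noteq> {}" using False unfolding S_def .
      obtain p1 where p1: "p1 \<in> S" "\<forall>q\<in>S. g p1 \<le> g q"
        using continuous_attains_inf[OF cS neS cgS] by blast
      have "p1 \<in> P" "L p1 \<le> 0" using p1 unfolding S_def by auto
      have "V < g p1"
      proof (rule ccontr)
        assume "\<not> V < g p1"
        then have "p1 \<in> W" using W_iff[OF \<open>p1 \<in> P\<close>] by simp
        then show False using L_pos \<open>L p1 \<le> 0\<close> by fastforce
      qed
      define \<eta> where "\<eta> = g p1 - V"
      have "\<eta> > 0" unfolding \<eta>_def using \<open>V < g p1\<close> by simp
      define \<epsilon> where "\<epsilon> = min (1 / (1 + \<Lambda>)) (\<eta> / (2 * M))"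
      have "\<epsilon> > 0" unfolding \<epsilon>_def using \<Lambda>_nn \<open>\<eta> > 0\<close> M(1) by simp
      have eM: "\<epsilon> * M \<le> \<eta> / 2"
      proof -
        have "\<epsilon> * M \<le> (\<eta> / (2 * M)) * M"
          unfolding \<epsilon>_def using M(1) by (intro mult_right_mono) auto
        also have "\<dots> = \<eta> / 2" using M(1) by simp
        finally show ?thesis .
      qed
      have "V < g p + \<epsilon> * L p" if "p \<in> P" for p
      proof (cases "L p \<le> 0")
        case True
        then have "p \<in> S" unfolding S_def using that by simp
        then have "g p1 \<le> g p" using p1 by blast
        have "- M \<le> L p" using M(2) that by fastforce
        then have "\<epsilon> * (- M) \<le> \<epsilon> * L p" using \<open>\<epsilon> > 0\<close> by (intro mult_left_mono) auto
        then show ?thesis using eM \<open>g p1 \<le> g p\<close> \<open>\<eta> > 0\<close> unfolding \<eta>_def by simp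
      next
        case False
        then have "\<epsilon> * L p > 0" using \<open>\<epsilon> > 0\<close> by simp
        then show ?thesis using gV[OF that] by simp
      qed
      moreover have "\<epsilon> \<le> 1 / (1 + \<Lambda>)" unfolding \<epsilon>_def by simp
      ultimately show ?thesis using that \<open>\<epsilon> > 0\<close> by blast
    qed
    have eL: "\<epsilon> * \<Lambda> \<le> 1"
    proof -
      have "\<epsilon> * (1 + \<Lambda>) \<le> 1" using eps(2) \<Lambda>_nn by (simp add: field_simps)
      then show ?thesis using eps(1) by (simp add: algebra_simps)
    qed
    define \<tau> where "\<tau> m c = (if c = m then 1 else 0)
        + \<epsilon> * (lam m c - (if c = m then (\<Sum>d\<in>UNIV. lam m d) else 0))" for m c
    have rows: "\<forall>m. sum (\<tau> m) UNIV = 1"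
    proof
      fix m
      have a: "(\<Sum>c\<in>UNIV. (if c = m then sum (lam m) UNIV else 0)) = sum (lam m) UNIV" by simp
      have b: "(\<Sum>c\<in>UNIV. \<epsilon> * (lam m c - (if c = m then sum (lam m) UNIV else 0)))
          = \<epsilon> * (sum (lam m) UNIV - (\<Sum>c\<in>UNIV. (if c = m then sum (lam m) UNIV else 0)))"
        by (simp only: sum_distrib_left[symmetric] sum_subtractf)
      have "sum (\<tau> m) UNIV = (\<Sum>c\<in>UNIV. (if c = m then 1 else 0))
          + (\<Sum>c\<in>UNIV. \<epsilon> * (lam m c - (if c = m then sum (lam m) UNIV else 0)))"
        unfolding \<tau>_def sum.distrib by simp
      then show "sum (\<tau> m) UNIV = 1" using a b by simp
    qed
    have nn: "0 \<le> \<tau> m c" for m c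
    proof (cases "c = m")
      case True
      have "(\<Sum>d\<in>UNIV. lam m d) \<le> \<Lambda>"
        unfolding \<Lambda>_def
        by (rule member_le_sum[where f="\<lambda>m. \<Sum>d\<in>UNIV. lam m d"]) (auto intro: sum_nonneg lam_nn)
      then have "\<epsilon> * (\<Sum>d\<in>UNIV. lam m d) \<le> 1"
        using eL eps(1) by (meson mult_left_mono less_imp_le order_trans)
      moreover have "0 \<le> \<epsilon> * lam m m" using eps(1) lam_nn by simp
      ultimately show ?thesis unfolding \<tau>_def using True by (simp add: algebra_simps)
    next
      case False
      then show ?thesis unfolding \<tau>_def using eps(1) lam_nn by simp
    qed
    have st: "is_strategy \<tau>" unfolding is_strategy_def is_dist_def using rows nn by auto
    have ident: "ur_p u p \<sigma> \<tau> = g p + \<epsilon> * L p" for p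
    proof -
      have tm: "\<tau> m c * inner p (dvec u \<sigma> m c) = \<epsilon> * (lam m c * inner p (dvec u \<sigma> m c))" for m c
        by (cases "c = m") (simp_all add: \<tau>_def dvec_diag)
      show ?thesis unfolding key_identity[OF rows] g_def L_def tm
        by (simp add: sum_distrib_left)
    qed
    obtain p2 where p2: "p2 \<in> P" "ur u P \<sigma> \<tau> = ur_p u p2 \<sigma> \<tau>"
      using ur_attained[OF cP assms(1)] by blast
    have "ur u P \<sigma> obedient < ur u P \<sigma> \<tau>"
      using p2 ident eps(3) p0(2) unfolding V_def by simp
    moreover have "ur u P \<sigma> \<tau> \<le> ur u P \<sigma> obedient"
      using BR st unfolding BR_def by blast
    ultimately show False by simp
  qed
qed

end
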